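(* Let $\phi>0$, $\eta\in[0,1)$, let $\{U_t\}_{t\ge1}$ be i.i.d. uniform on $[0,1]$, $\{R_t\}_{t\ge1}$ i.i.d. nonnegative with distribution $F_R$, independent of $\{U_t\}$, and let $X_0\ge0$ be independent of both sequences with $\mathbb P(X_0>x)$ regularly varying at infinity with index $-\alpha$, $\alpha>0$. Define $$X_{t+1}=R_{t+1}\big(X_t^\phi\,\mathbf 1\{\eta\le U_{t+1}\}+\mathbf 1\{\eta>U_{t+1}\}\big),\quad t\ge0.$$ Then for every $h\ge1$, conditionally on $X_0>x$, $(x^{-1}X_0,x^{-\phi}X_1,\dots,x^{-\phi^h}X_h)$ converges in distribution as $x\to\infty$ to $(Y_0,\dots,Y_h)$, where $Y_j=Y_{j-1}^\phi W_j$, $W_1,\dots,W_h$ are i.i.d. with distribution $G=(1-\eta)F_R+\eta\delta_0$ ($\delta_0$ the Dirac mass at $0$), independent of $Y_0$, and $\mathbb P(Y_0>y)=y^{-\alpha}$ for $y\ge1$. *)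

theory Defs
  imports "HOL-Probability.Probability"
begin

definition regularly_varying :: "real \<Rightarrow> (real \<Rightarrow> real) \<Rightarrow> bool" where
  "regularly_varying \<rho> f \<longleftrightarrow>
     eventually (\<lambda>x. f x > 0) at_top \<and>
     (\<forall>c>0. ((\<lambda>x. f (c * x) / f x) \<longlongrightarrow> c powr \<rho>) at_top)"

end

theory Submission
  imports Defs
begin


primrec Vf :: "real \<Rightarrow> real \<Rightarrow> real \<Rightarrow> real \<Rightarrow> (nat \<Rightarrow> real) \<Rightarrow> (nat \<Rightarrow> real) \<Rightarrow> nat \<Rightarrow> real" where
  "Vf \<phi> \<eta> e z u r 0 = z"
| "Vf \<phi> \<eta> e z u r (Suc j) = r (Suc j) *
     (if \<eta> \<le> u (Suc j) then max 0 (Vf \<phi> \<eta> e z u r j) powr \<phi> else max 0 e powr (\<phi> ^ Suc j))"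

definition vecf :: "real \<Rightarrow> real \<Rightarrow> nat \<Rightarrow> real \<Rightarrow> real \<Rightarrow> (nat \<Rightarrow> real) \<Rightarrow> (nat \<Rightarrow> real) \<Rightarrow> nat \<Rightarrow> real" where
  "vecf \<phi> \<eta> h e z u r = (\<lambda>j. if j \<le> h then Vf \<phi> \<eta> e z u r j else 0)"

primrec Pf :: "real \<Rightarrow> real \<Rightarrow> (nat \<Rightarrow> real) \<Rightarrow> nat \<Rightarrow> real" where
  "Pf \<phi> z w 0 = z"
| "Pf \<phi> z w (Suc j) = max 0 (Pf \<phi> z w j) powr \<phi> * w (Suc j)"

definition vecP :: "real \<Rightarrow> nat \<Rightarrow> real \<Rightarrow> (nat \<Rightarrow> real) \<Rightarrow> nat \<Rightarrow> real" where
  "vecP \<phi> h z w = (\<lambda>j. if j \<le> h then Pf \<phi> z w j else 0)"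

lemma Vf_zero: "Vf \<phi> \<eta> 0 z u r j = Pf \<phi> z (\<lambda>j. r j * (if \<eta> \<le> u j then 1 else 0)) j"
  by (induction j) auto

lemma vecf_zero: "vecf \<phi> \<eta> h 0 z u r = vecP \<phi> h z (\<lambda>j. r j * (if \<eta> \<le> u j then 1 else 0))"
  unfolding vecf_def vecP_def Vf_zero ..

lemma Vf_cont:
  assumes "\<phi> > 0"
  shows "continuous_on UNIV (\<lambda>p::real\<times>real. Vf \<phi> \<eta> (fst p) (snd p) u r j)"
proof (induction j)
  case 0 then show ?case by (simp add: continuous_on_snd continuous_on_id)
next
  case (Suc j)
  have c1: "continuous_on UNIV (\<lambda>p::real\<times>real. max 0 (Vf \<phi> \<eta> (fst p) (snd p) u r j) powr \<phi>)"
    by (rule continuous_on_powr') (use assms Suc in \<open>auto intro!: continuous_intros\<close>)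
  have c2: "continuous_on UNIV (\<lambda>p::real\<times>real. max 0 (fst p) powr (\<phi> ^ Suc j))"
    by (rule continuous_on_powr') (use assms in \<open>auto intro!: continuous_intros\<close>)
  show ?case using c1 c2 by (cases "\<eta> \<le> u (Suc j)") (auto intro!: continuous_intros)
qed

lemma vecf_cont:
  assumes "\<phi> > 0"
  shows "continuous_on UNIV (\<lambda>p::real\<times>real. vecf \<phi> \<eta> h (fst p) (snd p) u r)"
  unfolding vecf_def
  by (rule continuous_on_coordinatewise_then_product, case_tac "i \<le> h") (auto intro!: continuous_intros Vf_cont assms)

lemma Vf_meas:
  assumes [measurable]: "e \<in> borel_measurable M" "z \<in> borel_measurable M"
    "\<And>i. 1 \<le> i \<Longrightarrow> i \<le> h \<Longrightarrow> (\<lambda>x. u x i) \<in> borel_measurable M"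
    "\<And>i. 1 \<le> i \<Longrightarrow> i \<le> h \<Longrightarrow> (\<lambda>x. r x i) \<in> borel_measurable M"
  shows "j \<le> h \<Longrightarrow> (\<lambda>x. Vf \<phi> \<eta> (e x) (z x) (u x) (r x) j) \<in> borel_measurable M"
proof (induction j)
  case 0 then show ?case by simp
next
  case (Suc j)
  then have [measurable]: "(\<lambda>x. Vf \<phi> \<eta> (e x) (z x) (u x) (r x) j) \<in> borel_measurable M"
    "(\<lambda>x. u x (Suc j)) \<in> borel_measurable M" "(\<lambda>x. r x (Suc j)) \<in> borel_measurable M"
    using assms by auto
  show ?case by simp
qed

lemma vecf_meas:
  assumes "e \<in> borel_measurable M" "z \<in> borel_measurable M"
    "\<And>i. 1 \<le> i \<Longrightarrow> i \<le> h \<Longrightarrow> (\<lambda>x. u x i) \<in> borel_measurable M"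
    "\<And>i. 1 \<le> i \<Longrightarrow> i \<le> h \<Longrightarrow> (\<lambda>x. r x i) \<in> borel_measurable M"
  shows "(\<lambda>x. vecf \<phi> \<eta> h (e x) (z x) (u x) (r x)) \<in> borel_measurable M"
  unfolding vecf_def
  by (rule measurable_coordinatewise_then_product) (case_tac "i \<le> h", auto intro: Vf_meas[OF assms])

lemma Pf_meas:
  assumes [measurable]: "z \<in> borel_measurable M"
    "\<And>i. 1 \<le> i \<Longrightarrow> i \<le> h \<Longrightarrow> (\<lambda>x. w x i) \<in> borel_measurable M"
  shows "j \<le> h \<Longrightarrow> (\<lambda>x. Pf \<phi> (z x) (w x) j) \<in> borel_measurable M"
proof (induction j)
  case 0 then show ?case by simp
next
  case (Suc j)
  then have [measurable]: "(\<lambda>x. Pf \<phi> (z x) (w x) j) \<in> borel_measurable M"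
    "(\<lambda>x. w x (Suc j)) \<in> borel_measurable M"
    using assms by auto
  show ?case by simp
qed

lemma vecP_meas:
  assumes "z \<in> borel_measurable M"
    "\<And>i. 1 \<le> i \<Longrightarrow> i \<le> h \<Longrightarrow> (\<lambda>x. w x i) \<in> borel_measurable M"
  shows "(\<lambda>x. vecP \<phi> h (z x) (w x)) \<in> borel_measurable M"
  unfolding vecP_def
  by (rule measurable_coordinatewise_then_product) (case_tac "i \<le> h", auto intro: Pf_meas[OF assms])




lemma freeze:
  fixes F :: "'c \<times> 'c \<Rightarrow> real"
  assumes M: "prob_space M" and ind: "prob_space.indep_var M MA A MB B"
    and F[measurable]: "F \<in> borel_measurable (MA \<Otimes>\<^sub>M MB)" and bnd: "\<And>p. \<bar>F p\<bar> \<le> C"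
  shows "(\<integral>\<omega>. F (A \<omega>, B \<omega>) \<partial>M) = (\<integral>\<omega>. (\<integral>\<omega>'. F (A \<omega>, B \<omega>') \<partial>M) \<partial>M)"
proof -
  interpret prob_space M by fact
  have rv: "random_variable MA A" "random_variable MB B"
    and eq: "distr M MA A \<Otimes>\<^sub>M distr M MB B = distr M (MA \<Otimes>\<^sub>M MB) (\<lambda>x. (A x, B x))"
    using ind by (simp_all add: indep_var_distribution_eq)
  note [measurable] = rv
  interpret PA: prob_space "distr M MA A" by (rule prob_space_distr) simp
  interpret PB: prob_space "distr M MB B" by (rule prob_space_distr) simp
  interpret P2: pair_prob_space "distr M MA A" "distr M MB B" ..
  have intF: "integrable (distr M MA A \<Otimes>\<^sub>M distr M MB B) F"
    by (rule P2.integrable_const_bound[where B=C]) (use bnd in auto)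
  have "(\<integral>\<omega>. F (A \<omega>, B \<omega>) \<partial>M) = integral\<^sup>L (distr M (MA \<Otimes>\<^sub>M MB) (\<lambda>x. (A x, B x))) F"
    by (subst integral_distr) auto
  also have "\<dots> = integral\<^sup>L (distr M MA A \<Otimes>\<^sub>M distr M MB B) F" by (simp add: eq)
  also have "\<dots> = (\<integral>a. (\<integral>b. F (a, b) \<partial>distr M MB B) \<partial>distr M MA A)"
    by (rule P2.integral_fst'[symmetric]) (rule intF)
  also have "\<dots> = (\<integral>a. (\<integral>\<omega>'. F (a, B \<omega>') \<partial>M) \<partial>distr M MA A)"
    by (intro Bochner_Integration.integral_cong refl integral_distr) auto
  also have "\<dots> = (\<integral>\<omega>. (\<integral>\<omega>'. F (A \<omega>, B \<omega>') \<partial>M) \<partial>M)"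
    by (subst integral_distr) auto
  finally show ?thesis .
qed

lemma integral_unif:
  fixes f :: "'a \<Rightarrow> real"
  assumes M: "prob_space M" and S[measurable]: "S \<in> sets M" and pos: "measure M S > 0"
    and f[measurable]: "f \<in> borel_measurable M"
  shows "integral\<^sup>L (uniform_measure M S) f = (\<integral>x. indicator S x * f x \<partial>M) / measure M S"
proof -
  interpret prob_space M by fact
  have d: "(\<lambda>x. indicator S x / emeasure M S) = (\<lambda>x. ennreal (indicator S x / measure M S))"
  proof (rule ext)
    fix x
    show "indicator S x / emeasure M S = ennreal (indicator S x / measure M S)"
    proof (cases "x \<in> S")
      case True
      then show ?thesis using divide_ennreal[of 1 "measure M S"] pos
        by (simp add: emeasure_eq_measure)
    next
      case False
      then show ?thesis by simp
    qed
  qed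
  have "uniform_measure M S = density M (\<lambda>x. ennreal (indicator S x / measure M S))"
    by (simp only: uniform_measure_def d)
  then have "integral\<^sup>L (uniform_measure M S) f = (\<integral>x. (indicator S x / measure M S) *\<^sub>R f x \<partial>M)"
    using integral_density[of f M "\<lambda>x. indicator S x / measure M S"] pos by simp
  also have "\<dots> = (\<integral>x. (indicator S x * f x) / measure M S \<partial>M)"
    by (intro Bochner_Integration.integral_cong refl) simp
  also have "\<dots> = (\<integral>x. indicator S x * f x \<partial>M) / measure M S"
    by (rule integral_divide_zero)
  finally show ?thesis .
qed




locale mt =
  fixes M :: "'a measure" and N :: "'b measure"
    and U R X :: "nat \<Rightarrow> 'a \<Rightarrow> real" and F_R :: "real measure"
    and Y W :: "nat \<Rightarrow> 'b \<Rightarrow> real"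
    and \<phi> \<eta> \<alpha> :: real and h :: nat
  assumes M: "prob_space M"
    and phi: "\<phi> > 0" and eta: "0 \<le> \<eta>" "\<eta> < 1" and alpha: "\<alpha> > 0"
    and indep: "prob_space.indep_vars M (\<lambda>_. borel)
        (\<lambda>i. case i of Inl t \<Rightarrow> U t | Inr (Inl t) \<Rightarrow> R t | Inr (Inr _) \<Rightarrow> X 0)
        ({Inl t | t. t \<ge> 1} \<union> {Inr (Inl t) | t. t \<ge> 1} \<union> {Inr (Inr ())})"
    and U_unif: "\<And>t. t \<ge> 1 \<Longrightarrow> distr M borel (U t) = uniform_measure lborel {0..1}"
    and R_distr: "\<And>t. t \<ge> 1 \<Longrightarrow> distr M borel (R t) = F_R"
    and R_nonneg: "\<And>t. t \<ge> 1 \<Longrightarrow> AE \<omega> in M. R t \<omega> \<ge> 0"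
    and X0_nonneg: "AE \<omega> in M. X 0 \<omega> \<ge> 0"
    and X0_tail: "regularly_varying (- \<alpha>) (\<lambda>x. measure M {\<omega> \<in> space M. x < X 0 \<omega>})"
    and X_rec: "\<And>t \<omega>. X (Suc t) \<omega> =
        R (Suc t) \<omega> * (if \<eta> \<le> U (Suc t) \<omega> then X t \<omega> powr \<phi> else 1)"
    and h: "h \<ge> 1"
    and N: "prob_space N"
    and Y_indep: "prob_space.indep_vars N (\<lambda>_. borel)
        (\<lambda>j. if j = 0 then Y 0 else W j) {0..h}"
    and Y0_tail: "\<And>y. y \<ge> 1 \<Longrightarrow> measure N {\<omega> \<in> space N. y < Y 0 \<omega>} = y powr (- \<alpha>)"
    and W_distr: "\<And>j A. j \<in> {1..h} \<Longrightarrow> A \<in> sets borel \<Longrightarrow>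
        measure N (W j -` A \<inter> space N) = (1 - \<eta>) * measure F_R A + \<eta> * indicator A 0"
    and Y_rec: "\<And>j \<omega>. Y (Suc j) \<omega> = Y j \<omega> powr \<phi> * W (Suc j) \<omega>"
begin

sublocale PM: prob_space M by (rule M)
sublocale PN: prob_space N by (rule N)

definition fam :: "nat + (nat + unit) \<Rightarrow> 'a \<Rightarrow> real" where
  "fam = (\<lambda>i. case i of Inl t \<Rightarrow> U t | Inr (Inl t) \<Rightarrow> R t | Inr (Inr _) \<Rightarrow> X 0)"

definition Ifam :: "(nat + (nat + unit)) set" where
  "Ifam = {Inl t | t. t \<ge> 1} \<union> {Inr (Inl t) | t. t \<ge> 1} \<union> {Inr (Inr ())}"

lemma indep': "PM.indep_vars (\<lambda>_. borel) fam Ifam"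
  using indep unfolding fam_def Ifam_def .

lemma meas_fam: "i \<in> Ifam \<Longrightarrow> fam i \<in> borel_measurable M"
  using indep' unfolding PM.indep_vars_def by auto
lemma meas_U[measurable]: "1 \<le> t \<Longrightarrow> U t \<in> borel_measurable M"
  using meas_fam[of "Inl t"] by (auto simp: Ifam_def fam_def)
lemma meas_R[measurable]: "1 \<le> t \<Longrightarrow> R t \<in> borel_measurable M"
  using meas_fam[of "Inr (Inl t)"] by (auto simp: Ifam_def fam_def)
lemma meas_X0[measurable]: "X 0 \<in> borel_measurable M"
  using meas_fam[of "Inr (Inr ())"] by (auto simp: Ifam_def fam_def)

lemma meas_X[measurable]: "X j \<in> borel_measurable M"
proof (induction j)
  case 0 then show ?case by simp
next
  case (Suc j)
  then have [measurable]: "X j \<in> borel_measurable M" .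
  show ?case unfolding X_rec[abs_def] by measurable
qed

lemma meas_Yf: "j \<in> {0..h} \<Longrightarrow> (if j = 0 then Y 0 else W j) \<in> borel_measurable N"
  using Y_indep unfolding PN.indep_vars_def by auto
lemma meas_Y0[measurable]: "Y 0 \<in> borel_measurable N"
  using meas_Yf[of 0] by simp
lemma meas_W[measurable]: "1 \<le> j \<Longrightarrow> j \<le> h \<Longrightarrow> W j \<in> borel_measurable N"
  using meas_Yf[of j] by simp

lemma meas_Y: "j \<le> h \<Longrightarrow> Y j \<in> borel_measurable N"
proof (induction j)
  case 0 then show ?case by simp
next
  case (Suc j)
  then have [measurable]: "Y j \<in> borel_measurable N" "W (Suc j) \<in> borel_measurable N" by auto
  show ?case unfolding Y_rec[abs_def] by measurable
qed

end



context mt begin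

lemma AE_goodM: "AE \<omega> in M. X 0 \<omega> \<ge> 0 \<and> (\<forall>t\<in>{1..h}. R t \<omega> \<ge> 0)"
proof -
  have "AE \<omega> in M. \<forall>t\<in>{1..h}. R t \<omega> \<ge> 0"
    by (rule AE_finite_allI) (auto intro: R_nonneg)
  with X0_nonneg show ?thesis by eventually_elim auto
qed

lemma X_ident:
  assumes x: "x > 0" and X0: "X 0 \<omega> \<ge> 0" and Rn: "\<forall>t\<in>{1..h}. R t \<omega> \<ge> 0"
  shows "j \<le> h \<Longrightarrow> X j \<omega> / x powr (\<phi> ^ j) = Vf \<phi> \<eta> (1/x) (X 0 \<omega> / x) (\<lambda>j. U j \<omega>) (\<lambda>j. R j \<omega>) j
      \<and> X j \<omega> \<ge> 0"
proof (induction j)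
  case 0 then show ?case using x X0 by simp
next
  case (Suc j)
  then have IH: "X j \<omega> / x powr (\<phi> ^ j) = Vf \<phi> \<eta> (1/x) (X 0 \<omega> / x) (\<lambda>j. U j \<omega>) (\<lambda>j. R j \<omega>) j"
    and Xj: "X j \<omega> \<ge> 0" by auto
  have Rs: "R (Suc j) \<omega> \<ge> 0" using Rn Suc.prems by auto
  have nonneg: "X (Suc j) \<omega> \<ge> 0" using Rs by (simp add: X_rec)
  have Vnn: "Vf \<phi> \<eta> (1/x) (X 0 \<omega> / x) (\<lambda>j. U j \<omega>) (\<lambda>j. R j \<omega>) j \<ge> 0"
    using IH[symmetric] Xj by simp
  have e1: "X j \<omega> powr \<phi> / x powr (\<phi> * \<phi> ^ j) = (X j \<omega> / x powr (\<phi> ^ j)) powr \<phi>"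
    using Xj x by (simp add: powr_divide powr_powr mult.commute)
  have e2: "1 / x powr (\<phi> * \<phi> ^ j) = (1 / x) powr (\<phi> * \<phi> ^ j)"
    using x by (simp add: powr_divide)
  have "X (Suc j) \<omega> / x powr (\<phi> ^ Suc j) =
     R (Suc j) \<omega> * (if \<eta> \<le> U (Suc j) \<omega> then X j \<omega> powr \<phi> / x powr (\<phi> ^ Suc j) else 1 / x powr (\<phi> ^ Suc j))"
    by (simp add: X_rec)
  also have "\<dots> = Vf \<phi> \<eta> (1/x) (X 0 \<omega> / x) (\<lambda>j. U j \<omega>) (\<lambda>j. R j \<omega>) (Suc j)"
    using Vnn x by (simp add: e1 e2 IH)
  finally show ?case using nonneg by simp
qed

lemma vecX_ident:
  assumes x: "x > 0" and X0: "X 0 \<omega> \<ge> 0" and Rn: "\<forall>t\<in>{1..h}. R t \<omega> \<ge> 0"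
  shows "(\<lambda>j. if j \<le> h then X j \<omega> / x powr (\<phi> ^ j) else 0) =
     vecf \<phi> \<eta> h (1/x) (X 0 \<omega> / x) (\<lambda>j. U j \<omega>) (\<lambda>j. R j \<omega>)"
  unfolding vecf_def using X_ident[OF assms] by auto

lemma AE_Y0: "AE \<omega> in N. Y 0 \<omega> \<ge> 0"
proof -
  have "measure N {\<omega> \<in> space N. 1 < Y 0 \<omega>} = 1" using Y0_tail[of 1] by simp
  then have "AE \<omega> in N. \<omega> \<in> {\<omega> \<in> space N. 1 < Y 0 \<omega>}" by (rule PN.AE_prob_1)
  then show ?thesis by eventually_elim auto
qed

lemma FR_neg: "measure F_R {..<0} = 0"
proof -
  have "measure F_R {..<0} = measure M (R 1 -` {..<0} \<inter> space M)"
    using R_distr[of 1, symmetric] by (simp add: measure_distr)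
  also have "\<dots> = 0"
  proof -
    have "AE \<omega> in M. \<omega> \<notin> R 1 -` {..<0} \<inter> space M"
    proof -
      have "AE \<omega> in M. R 1 \<omega> \<ge> 0" using R_nonneg[of 1] by simp
      then show ?thesis by eventually_elim auto
    qed
    then show ?thesis by (subst PM.prob_eq_0) auto
  qed
  finally show ?thesis .
qed

lemma AE_W: assumes "j \<in> {1..h}" shows "AE \<omega> in N. W j \<omega> \<ge> 0"
proof -
  have [measurable]: "W j \<in> borel_measurable N" using assms by auto
  have "measure N (W j -` {..<0} \<inter> space N) = 0"
    using W_distr[OF assms, of "{..<0}"] FR_neg by simp
  then have "AE \<omega> in N. \<omega> \<notin> W j -` {..<0} \<inter> space N"
    by (subst PN.prob_eq_0[symmetric]) auto
  moreover have "AE \<omega> in N. \<omega> \<in> space N" by simp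
  ultimately show ?thesis by eventually_elim auto
qed

lemma AE_goodN: "AE \<omega> in N. Y 0 \<omega> \<ge> 0 \<and> (\<forall>j\<in>{1..h}. W j \<omega> \<ge> 0)"
proof -
  have "AE \<omega> in N. \<forall>j\<in>{1..h}. W j \<omega> \<ge> 0"
    by (rule AE_finite_allI) (auto intro: AE_W)
  with AE_Y0 show ?thesis by eventually_elim auto
qed

lemma Y_ident:
  assumes Y0: "Y 0 \<omega> \<ge> 0" and Wn: "\<forall>j\<in>{1..h}. W j \<omega> \<ge> 0"
  shows "j \<le> h \<Longrightarrow> Y j \<omega> = Pf \<phi> (Y 0 \<omega>) (\<lambda>j. W j \<omega>) j \<and> Y j \<omega> \<ge> 0"
proof (induction j)
  case 0 then show ?case using Y0 by simp
next
  case (Suc j)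
  then have IH: "Y j \<omega> = Pf \<phi> (Y 0 \<omega>) (\<lambda>j. W j \<omega>) j" and Yj: "Y j \<omega> \<ge> 0" by auto
  have Ws: "W (Suc j) \<omega> \<ge> 0" using Wn Suc.prems by auto
  show ?case using Ws Yj IH by (simp add: Y_rec)
qed

lemma vecY_ident:
  assumes Y0: "Y 0 \<omega> \<ge> 0" and Wn: "\<forall>j\<in>{1..h}. W j \<omega> \<ge> 0"
  shows "(\<lambda>j. if j \<le> h then Y j \<omega> else 0) = vecP \<phi> h (Y 0 \<omega>) (\<lambda>j. W j \<omega>)"
  unfolding vecP_def
proof (rule ext)
  fix j
  show "(if j \<le> h then Y j \<omega> else 0) = (if j \<le> h then Pf \<phi> (Y 0 \<omega>) (\<lambda>j. W j \<omega>) j else 0)"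
    using Y_ident[OF assms, of j] by (cases "j \<le> h") simp_all
qed

end


context mt begin
definition H :: "((nat \<Rightarrow> real) \<Rightarrow> real) \<Rightarrow> real \<Rightarrow> real \<Rightarrow> real" where
  "H g e z = (\<integral>\<omega>. g (vecf \<phi> \<eta> h e z (\<lambda>j. U j \<omega>) (\<lambda>j. R j \<omega>)) \<partial>M)"

lemma meas_gvecf:
  assumes g: "continuous_on UNIV g"
  shows "(\<lambda>\<omega>. g (vecf \<phi> \<eta> h e z (\<lambda>j. U j \<omega>) (\<lambda>j. R j \<omega>))) \<in> borel_measurable M"
  by (rule measurable_compose[OF vecf_meas borel_measurable_continuous_onI[OF g]]) auto

lemma H_bound:
  assumes g: "continuous_on UNIV g" and C: "\<And>v. \<bar>g v\<bar> \<le> C"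
  shows "\<bar>H g e z\<bar> \<le> C"
proof -
  have int: "integrable M (\<lambda>\<omega>. g (vecf \<phi> \<eta> h e z (\<lambda>j. U j \<omega>) (\<lambda>j. R j \<omega>)))"
    by (rule PM.integrable_const_bound[where B=C]) (use C meas_gvecf[OF g] in auto)
  have "H g e z \<le> C" unfolding H_def
    by (rule PM.integral_le_const[OF int]) (use C abs_le_D1 in auto)
  moreover have "- C \<le> H g e z" unfolding H_def
  proof (rule PM.integral_ge_const[OF int])
    have "\<And>v. - C \<le> g v" using C by (metis abs_le_iff minus_le_iff)
    then show "AE \<omega> in M. - C \<le> g (vecf \<phi> \<eta> h e z (\<lambda>j. U j \<omega>) (\<lambda>j. R j \<omega>))" by simp
  qed
  ultimately show ?thesis by simp
qed

lemma H_cont: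
  assumes g: "continuous_on UNIV g" and C: "\<And>v. \<bar>g v\<bar> \<le> C"
  shows "continuous_on UNIV (\<lambda>p. H g (fst p) (snd p))"
proof (rule continuous_on_sequentiallyI)
  fix u :: "nat \<Rightarrow> real \<times> real" and a assume u: "u \<longlonglongrightarrow> a"
  show "(\<lambda>n. H g (fst (u n)) (snd (u n))) \<longlonglongrightarrow> H g (fst a) (snd a)"
    unfolding H_def
  proof (rule integral_dominated_convergence[where w="\<lambda>_. C"])
    show "(\<lambda>\<omega>. g (vecf \<phi> \<eta> h (fst a) (snd a) (\<lambda>j. U j \<omega>) (\<lambda>j. R j \<omega>))) \<in> borel_measurable M"
      by (rule meas_gvecf[OF g])
    show "\<And>n. (\<lambda>\<omega>. g (vecf \<phi> \<eta> h (fst (u n)) (snd (u n)) (\<lambda>j. U j \<omega>) (\<lambda>j. R j \<omega>))) \<in> borel_measurable M"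
      by (rule meas_gvecf[OF g])
    show "integrable M (\<lambda>_. C)" by simp
    show "\<And>n. AE \<omega> in M. norm (g (vecf \<phi> \<eta> h (fst (u n)) (snd (u n)) (\<lambda>j. U j \<omega>) (\<lambda>j. R j \<omega>))) \<le> C"
      using C by simp
    show "AE \<omega> in M. (\<lambda>n. g (vecf \<phi> \<eta> h (fst (u n)) (snd (u n)) (\<lambda>j. U j \<omega>) (\<lambda>j. R j \<omega>)))
        \<longlonglongrightarrow> g (vecf \<phi> \<eta> h (fst a) (snd a) (\<lambda>j. U j \<omega>) (\<lambda>j. R j \<omega>))"
    proof (rule AE_I2)
      fix \<omega>
      have c: "continuous_on UNIV (\<lambda>p. g (vecf \<phi> \<eta> h (fst p) (snd p) (\<lambda>j. U j \<omega>) (\<lambda>j. R j \<omega>)))"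
        by (rule continuous_on_compose2[OF g vecf_cont[OF phi]]) auto
      show "(\<lambda>n. g (vecf \<phi> \<eta> h (fst (u n)) (snd (u n)) (\<lambda>j. U j \<omega>) (\<lambda>j. R j \<omega>)))
        \<longlonglongrightarrow> g (vecf \<phi> \<eta> h (fst a) (snd a) (\<lambda>j. U j \<omega>) (\<lambda>j. R j \<omega>))"
        by (rule continuous_on_tendsto_compose[OF c u]) auto
    qed
  qed
qed

end



context mt begin

definition i0 :: "nat + (nat + unit)" where "i0 = Inr (Inr ())"
definition J :: "(nat + (nat + unit)) set" where
  "J = {Inl t | t. 1 \<le> t \<and> t \<le> h} \<union> {Inr (Inl t) | t. 1 \<le> t \<and> t \<le> h}"

lemma indep_AB: "PM.indep_var (PiM {i0} (\<lambda>_. borel)) (\<lambda>\<omega>. restrict (\<lambda>i. fam i \<omega>) {i0})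
    (PiM J (\<lambda>_. borel)) (\<lambda>\<omega>. restrict (\<lambda>i. fam i \<omega>) J)"
  by (rule PM.indep_var_restrict[OF indep']) (auto simp: i0_def J_def Ifam_def)

lemma vecf_cong:
  assumes "\<And>j. 1 \<le> j \<Longrightarrow> j \<le> h \<Longrightarrow> u j = u' j" "\<And>j. 1 \<le> j \<Longrightarrow> j \<le> h \<Longrightarrow> r j = r' j"
  shows "vecf \<phi> \<eta> h e z u r = vecf \<phi> \<eta> h e z u' r'"
proof -
  have "j \<le> h \<Longrightarrow> Vf \<phi> \<eta> e z u r j = Vf \<phi> \<eta> e z u' r' j" for j
    by (induction j) (auto simp: assms)
  then show ?thesis unfolding vecf_def by auto
qed

lemma vecP_cong:
  assumes "\<And>j. 1 \<le> j \<Longrightarrow> j \<le> h \<Longrightarrow> w j = w' j"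
  shows "vecP \<phi> h z w = vecP \<phi> h z w'"
proof -
  have "j \<le> h \<Longrightarrow> Pf \<phi> z w j = Pf \<phi> z w' j" for j
    by (induction j) (auto simp: assms)
  then show ?thesis unfolding vecP_def by auto
qed

definition Sx :: "real \<Rightarrow> 'a set" where "Sx x = {\<omega> \<in> space M. x < X 0 \<omega>}"
lemma Sx_sets[measurable]: "Sx x \<in> sets M" unfolding Sx_def by measurable

definition FF :: "((nat \<Rightarrow> real) \<Rightarrow> real) \<Rightarrow> real \<Rightarrow> (nat + (nat + unit) \<Rightarrow> real) \<times> (nat + (nat + unit) \<Rightarrow> real) \<Rightarrow> real" where
  "FF g x p = indicator {x<..} (fst p i0) *
     g (vecf \<phi> \<eta> h (1/x) (fst p i0 / x) (\<lambda>j. snd p (Inl j)) (\<lambda>j. snd p (Inr (Inl j))))"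

lemma FF_meas:
  assumes g: "continuous_on UNIV g"
  shows "FF g x \<in> borel_measurable (PiM {i0} (\<lambda>_. borel) \<Otimes>\<^sub>M PiM J (\<lambda>_. borel))"
proof -
  have f0[measurable]: "(\<lambda>p. fst p i0) \<in> borel_measurable (PiM {i0} (\<lambda>_. borel) \<Otimes>\<^sub>M PiM J (\<lambda>_. borel))"
    by (rule measurable_compose[OF measurable_fst measurable_component_singleton]) simp
  have v: "(\<lambda>p. vecf \<phi> \<eta> h (1/x) (fst p i0 / x) (\<lambda>j. snd p (Inl j)) (\<lambda>j. snd p (Inr (Inl j))))
     \<in> borel_measurable (PiM {i0} (\<lambda>_. borel) \<Otimes>\<^sub>M PiM J (\<lambda>_. borel))"
    by (rule vecf_meas) (auto intro!: measurable_compose[OF measurable_snd measurable_component_singleton] simp: J_def)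
  have [measurable]: "(\<lambda>p. g (vecf \<phi> \<eta> h (1/x) (fst p i0 / x) (\<lambda>j. snd p (Inl j)) (\<lambda>j. snd p (Inr (Inl j)))))
     \<in> borel_measurable (PiM {i0} (\<lambda>_. borel) \<Otimes>\<^sub>M PiM J (\<lambda>_. borel))"
    by (rule measurable_compose[OF v borel_measurable_continuous_onI[OF g]])
  show ?thesis unfolding FF_def by measurable
qed

lemma H_meas:
  assumes g: "continuous_on UNIV g" and C: "\<And>v. \<bar>g v\<bar> \<le> C"
    and [measurable]: "f1 \<in> borel_measurable M'" "f2 \<in> borel_measurable M'"
  shows "(\<lambda>\<omega>. H g (f1 \<omega>) (f2 \<omega>)) \<in> borel_measurable M'"
  by (rule borel_measurable_continuous_Pair[OF _ _ H_cont[OF g C]]) simp_all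

lemma LHS_M:
  assumes g: "continuous_on UNIV g" and C: "\<And>v. \<bar>g v\<bar> \<le> C"
  shows "(\<integral>\<omega>. indicator (Sx x) \<omega> * g (vecf \<phi> \<eta> h (1/x) (X 0 \<omega> / x) (\<lambda>j. U j \<omega>) (\<lambda>j. R j \<omega>)) \<partial>M)
       = (\<integral>\<omega>. indicator (Sx x) \<omega> * H g (1/x) (X 0 \<omega> / x) \<partial>M)"
proof -
  let ?A = "\<lambda>\<omega>. restrict (\<lambda>i. fam i \<omega>) {i0}" and ?B = "\<lambda>\<omega>. restrict (\<lambda>i. fam i \<omega>) J"
  have bnd: "\<bar>FF g x p\<bar> \<le> C" for p
  proof -
    have "\<bar>FF g x p\<bar> \<le> \<bar>g (vecf \<phi> \<eta> h (1/x) (fst p i0 / x) (\<lambda>j. snd p (Inl j)) (\<lambda>j. snd p (Inr (Inl j))))\<bar>"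
      unfolding FF_def by (simp add: abs_mult indicator_def)
    also have "\<dots> \<le> C" by (rule C)
    finally show ?thesis .
  qed
  have fr: "(\<integral>\<omega>. FF g x (?A \<omega>, ?B \<omega>) \<partial>M) = (\<integral>\<omega>. (\<integral>\<omega>'. FF g x (?A \<omega>, ?B \<omega>') \<partial>M) \<partial>M)"
    by (rule freeze[OF M indep_AB FF_meas[OF g] bnd])
  have vc: "vecf \<phi> \<eta> h e z (\<lambda>j. ?B \<omega> (Inl j)) (\<lambda>j. ?B \<omega> (Inr (Inl j))) =
      vecf \<phi> \<eta> h e z (\<lambda>j. U j \<omega>) (\<lambda>j. R j \<omega>)" for e z \<omega>
    by (rule vecf_cong) (auto simp: J_def fam_def)
  have l: "FF g x (?A \<omega>, ?B \<omega>) = indicator (Sx x) \<omega> * g (vecf \<phi> \<eta> h (1/x) (X 0 \<omega> / x) (\<lambda>j. U j \<omega>) (\<lambda>j. R j \<omega>))"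
    if "\<omega> \<in> space M" for \<omega>
    unfolding FF_def fst_conv snd_conv vc using that by (simp add: i0_def fam_def Sx_def indicator_def)
  have r: "(\<integral>\<omega>'. FF g x (?A \<omega>, ?B \<omega>') \<partial>M) = indicator (Sx x) \<omega> * H g (1/x) (X 0 \<omega> / x)"
    if "\<omega> \<in> space M" for \<omega>
    unfolding FF_def fst_conv snd_conv vc H_def using that by (simp add: i0_def fam_def Sx_def indicator_def)
  have "(\<integral>\<omega>. indicator (Sx x) \<omega> * g (vecf \<phi> \<eta> h (1/x) (X 0 \<omega> / x) (\<lambda>j. U j \<omega>) (\<lambda>j. R j \<omega>)) \<partial>M)
      = (\<integral>\<omega>. FF g x (?A \<omega>, ?B \<omega>) \<partial>M)"
    by (intro Bochner_Integration.integral_cong refl l[symmetric]) 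
  also have "\<dots> = (\<integral>\<omega>. (\<integral>\<omega>'. FF g x (?A \<omega>, ?B \<omega>') \<partial>M) \<partial>M)" by (rule fr)
  also have "\<dots> = (\<integral>\<omega>. indicator (Sx x) \<omega> * H g (1/x) (X 0 \<omega> / x) \<partial>M)"
    by (intro Bochner_Integration.integral_cong refl r)
  finally show ?thesis .
qed

lemma LHS_eq:
  assumes g: "continuous_on UNIV g" and C: "\<And>v. \<bar>g v\<bar> \<le> C" and x: "x > 0"
    and pos: "measure M (Sx x) > 0"
  shows "(LINT \<omega>|uniform_measure M (Sx x). g (\<lambda>j. if j \<le> h then X j \<omega> / x powr (\<phi> ^ j) else 0))
       = (\<integral>w. H g (1/x) w \<partial>distr (uniform_measure M (Sx x)) borel (\<lambda>\<omega>. X 0 \<omega> / x))"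
proof -
  have m1: "(\<lambda>\<omega>. (\<lambda>j. if j \<le> h then X j \<omega> / x powr (\<phi> ^ j) else 0)) \<in> borel_measurable M"
    by (rule measurable_coordinatewise_then_product) simp
  have g1: "(\<lambda>\<omega>. g (\<lambda>j. if j \<le> h then X j \<omega> / x powr (\<phi> ^ j) else 0)) \<in> borel_measurable M"
    by (rule measurable_compose[OF m1 borel_measurable_continuous_onI[OF g]])
  have v2: "(\<lambda>\<omega>. vecf \<phi> \<eta> h (1/x) (X 0 \<omega> / x) (\<lambda>j. U j \<omega>) (\<lambda>j. R j \<omega>)) \<in> borel_measurable M"
    by (rule vecf_meas) auto
  have g2: "(\<lambda>\<omega>. g (vecf \<phi> \<eta> h (1/x) (X 0 \<omega> / x) (\<lambda>j. U j \<omega>) (\<lambda>j. R j \<omega>))) \<in> borel_measurable M"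
    by (rule measurable_compose[OF v2 borel_measurable_continuous_onI[OF g]])
  have h2: "(\<lambda>\<omega>. H g (1/x) (X 0 \<omega> / x)) \<in> borel_measurable M"
    by (rule H_meas[OF g C]) auto
  have "(LINT \<omega>|uniform_measure M (Sx x). g (\<lambda>j. if j \<le> h then X j \<omega> / x powr (\<phi> ^ j) else 0))
      = (LINT \<omega>|uniform_measure M (Sx x). g (vecf \<phi> \<eta> h (1/x) (X 0 \<omega> / x) (\<lambda>j. U j \<omega>) (\<lambda>j. R j \<omega>)))"
  proof (rule integral_cong_AE)
    show "(\<lambda>\<omega>. g (\<lambda>j. if j \<le> h then X j \<omega> / x powr (\<phi> ^ j) else 0)) \<in> borel_measurable (uniform_measure M (Sx x))"
      using g1 by simp
    show "(\<lambda>\<omega>. g (vecf \<phi> \<eta> h (1/x) (X 0 \<omega> / x) (\<lambda>j. U j \<omega>) (\<lambda>j. R j \<omega>))) \<in> borel_measurable (uniform_measure M (Sx x))"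
      using g2 by simp
    show "AE \<omega> in uniform_measure M (Sx x). g (\<lambda>j. if j \<le> h then X j \<omega> / x powr (\<phi> ^ j) else 0)
        = g (vecf \<phi> \<eta> h (1/x) (X 0 \<omega> / x) (\<lambda>j. U j \<omega>) (\<lambda>j. R j \<omega>))"
      by (rule AE_uniform_measureI[OF Sx_sets]) (use AE_goodM in \<open>eventually_elim, simp add: vecX_ident[OF x]\<close>)
  qed
  also have "\<dots> = (\<integral>\<omega>. indicator (Sx x) \<omega> * g (vecf \<phi> \<eta> h (1/x) (X 0 \<omega> / x) (\<lambda>j. U j \<omega>) (\<lambda>j. R j \<omega>)) \<partial>M) / measure M (Sx x)"
    by (rule integral_unif[OF M Sx_sets pos g2])
  also have "\<dots> = (\<integral>\<omega>. indicator (Sx x) \<omega> * H g (1/x) (X 0 \<omega> / x) \<partial>M) / measure M (Sx x)"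
    by (simp only: LHS_M[OF g C])
  also have "\<dots> = (LINT \<omega>|uniform_measure M (Sx x). H g (1/x) (X 0 \<omega> / x))"
    by (rule integral_unif[OF M Sx_sets pos h2, symmetric])
  also have "\<dots> = (\<integral>w. H g (1/x) w \<partial>distr (uniform_measure M (Sx x)) borel (\<lambda>\<omega>. X 0 \<omega> / x))"
    by (rule integral_distr[symmetric]) (auto intro: H_meas[OF g C])
  finally show ?thesis .
qed

end



context mt begin

definition Q :: "nat \<Rightarrow> 'a \<Rightarrow> real" where
  "Q j \<omega> = R j \<omega> * (if \<eta> \<le> U j \<omega> then 1 else 0)"

lemma meas_Q[measurable]: "1 \<le> j \<Longrightarrow> Q j \<in> borel_measurable M"
  unfolding Q_def[abs_def] by measurable

lemma PU: assumes j: "1 \<le> j" shows "PM.prob {\<omega> \<in> space M. \<eta> \<le> U j \<omega>} = 1 - \<eta>"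
proof -
  have [measurable]: "U j \<in> borel_measurable M" using j by simp
  have "PM.prob {\<omega> \<in> space M. \<eta> \<le> U j \<omega>} = measure (distr M borel (U j)) {\<eta>..}"
    by (subst measure_distr) (auto intro!: arg_cong[where f="measure M"])
  also have "\<dots> = measure (uniform_measure lborel {0..1}) {\<eta>..}" using U_unif[OF j] by simp
  also have "\<dots> = measure lborel ({0..1} \<inter> {\<eta>..}) / measure lborel {0..1::real}"
    by (rule measure_uniform_measure) auto
  also have "{0..1} \<inter> {\<eta>..} = {\<eta>..(1::real)}" using eta by auto
  also have "measure lborel {\<eta>..(1::real)} = 1 - \<eta>" using eta by (simp add: measure_def)
  also have "measure lborel {0..(1::real)} = 1" by (simp add: measure_def)
  finally show ?thesis by simp
qed

lemma PQ:
  assumes j: "1 \<le> j" and A[measurable]: "A \<in> sets borel"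
  shows "PM.prob (Q j -` A \<inter> space M) = (1 - \<eta>) * measure F_R A + \<eta> * indicator A 0"
proof -
  have [measurable]: "U j \<in> borel_measurable M" "R j \<in> borel_measurable M" using j by simp_all
  define E1 where "E1 = {\<omega> \<in> space M. \<eta> \<le> U j \<omega>}"
  define E2 where "E2 = R j -` A \<inter> space M"
  have [measurable]: "E1 \<in> sets M" "E2 \<in> sets M" unfolding E1_def E2_def by measurable
  have split: "Q j -` A \<inter> space M = (E1 \<inter> E2) \<union> ((space M - E1) \<inter> (if 0 \<in> A then space M else {}))"
    unfolding E1_def E2_def Q_def by (auto split: if_splits)
  have ind: "PM.prob (E1 \<inter> E2) = PM.prob E1 * PM.prob E2"
  proof -
    let ?K = "{Inl j, Inr (Inl j)} :: (nat + (nat + unit)) set"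
    let ?A = "\<lambda>i. case i of Inl _ \<Rightarrow> {\<eta>..} | _ \<Rightarrow> A"
    have "PM.prob (\<Inter>i\<in>?K. fam i -` ?A i \<inter> space M) = (\<Prod>i\<in>?K. PM.prob (fam i -` ?A i \<inter> space M))"
      by (rule PM.indep_varsD[OF indep']) (use j in \<open>auto simp: Ifam_def\<close>)
    moreover have "(\<Inter>i\<in>?K. fam i -` ?A i \<inter> space M) = E1 \<inter> E2"
      unfolding E1_def E2_def fam_def by auto
    moreover have "fam (Inl j) -` ?A (Inl j) \<inter> space M = E1"
      unfolding E1_def fam_def by auto
    moreover have "fam (Inr (Inl j)) -` ?A (Inr (Inl j)) \<inter> space M = E2"
      unfolding E2_def fam_def by auto
    ultimately show ?thesis by simp
  qed
  have p1: "PM.prob E1 = 1 - \<eta>" unfolding E1_def by (rule PU[OF j])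
  have p2: "PM.prob E2 = measure F_R A"
    unfolding E2_def using R_distr[OF j, symmetric] by (simp add: measure_distr)
  have p3: "PM.prob (space M - E1) = \<eta>" using p1 by (simp add: PM.prob_compl)
  have "PM.prob (Q j -` A \<inter> space M) =
      PM.prob (E1 \<inter> E2) + PM.prob ((space M - E1) \<inter> (if 0 \<in> A then space M else {}))"
    unfolding split by (rule PM.finite_measure_Union) auto
  also have "\<dots> = (1 - \<eta>) * measure F_R A + \<eta> * indicator A 0"
    using ind p1 p2 p3 by (cases "0 \<in> A") (auto simp: Int_absorb2)
  finally show ?thesis .
qed

lemma marg_eq: assumes j: "j \<in> {1..h}" shows "distr M borel (Q j) = distr N borel (W j)"
proof (rule measure_eqI)
  fix A assume "A \<in> sets (distr M borel (Q j))"
  then have A[measurable]: "A \<in> sets borel" by simp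
  have [measurable]: "W j \<in> borel_measurable N" "Q j \<in> borel_measurable M" using j by auto
  have "emeasure (distr M borel (Q j)) A = ennreal (PM.prob (Q j -` A \<inter> space M))"
    by (simp add: emeasure_distr PM.emeasure_eq_measure)
  also have "\<dots> = ennreal (measure N (W j -` A \<inter> space N))"
    using PQ[of j A] W_distr[OF j A] j by simp
  also have "\<dots> = emeasure (distr N borel (W j)) A"
    by (simp add: emeasure_distr PN.emeasure_eq_measure)
  finally show "emeasure (distr M borel (Q j)) A = emeasure (distr N borel (W j)) A" .
qed simp

lemma indep_Q: "PM.indep_vars (\<lambda>_. borel) Q {1..h}"
proof -
  let ?K = "\<lambda>j::nat. {Inl j, Inr (Inl j)} :: (nat + (nat + unit)) set"
  have i1: "PM.indep_vars (\<lambda>j. PiM (?K j) (\<lambda>_. borel)) (\<lambda>j \<omega>. restrict (\<lambda>i. fam i \<omega>) (?K j)) {1..h}"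
    by (rule PM.indep_vars_restrict[OF indep']) (auto simp: Ifam_def disjoint_family_on_def)
  have i2: "PM.indep_vars (\<lambda>_. borel)
     (\<lambda>j \<omega>. (\<lambda>b. b (Inr (Inl j)) * (if \<eta> \<le> b (Inl j) then 1 else 0)) (restrict (\<lambda>i. fam i \<omega>) (?K j))) {1..h}"
  proof (rule PM.indep_vars_compose2[OF i1])
    fix j :: nat assume "j \<in> {1..h}"
    have [measurable]: "(\<lambda>b. b (Inr (Inl j))) \<in> borel_measurable (PiM (?K j) (\<lambda>_. borel))"
      "(\<lambda>b. b (Inl j)) \<in> borel_measurable (PiM (?K j) (\<lambda>_. borel))"
      by (rule measurable_component_singleton, simp)+
    show "(\<lambda>b. b (Inr (Inl j)) * (if \<eta> \<le> b (Inl j) then 1 else 0)) \<in> borel_measurable (PiM (?K j) (\<lambda>_. borel))"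
      by measurable
  qed
  show ?thesis
    by (rule iffD1[OF PM.indep_vars_cong i2]) (auto simp: Q_def fam_def fun_eq_iff)
qed

lemma indep_Wh: "PN.indep_vars (\<lambda>_. borel) W {1..h}"
proof -
  have "PN.indep_vars (\<lambda>_. borel) (\<lambda>j. if j = 0 then Y 0 else W j) {1..h}"
    by (rule PN.indep_vars_subset[OF Y_indep]) auto
  then show ?thesis by (rule iffD1[OF PN.indep_vars_cong[OF refl _ refl], rotated]) auto
qed

definition H0 :: "((nat \<Rightarrow> real) \<Rightarrow> real) \<Rightarrow> real \<Rightarrow> real" where
  "H0 g z = (\<integral>\<omega>. g (vecP \<phi> h z (\<lambda>j. W j \<omega>)) \<partial>N)"

lemma H0_eq:
  assumes g: "continuous_on UNIV g"
  shows "H0 g z = H g 0 z"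
proof -
  have hne: "{1..h} \<noteq> {}" using h by auto
  have mP: "(\<lambda>b. g (vecP \<phi> h z b)) \<in> borel_measurable (PiM {1..h} (\<lambda>_. borel))"
    by (rule measurable_compose[OF vecP_meas borel_measurable_continuous_onI[OF g]])
       (auto intro: measurable_component_singleton)
  have rvQ: "\<And>j. j \<in> {1..h} \<Longrightarrow> PM.random_variable borel (Q j)" by auto
  have rvW: "\<And>j. j \<in> {1..h} \<Longrightarrow> PN.random_variable borel (W j)" by auto
  have dQ: "distr M (PiM {1..h} (\<lambda>_. borel)) (\<lambda>\<omega>. restrict (\<lambda>j. Q j \<omega>) {1..h}) =
      PiM {1..h} (\<lambda>j. distr M borel (Q j))"
    using PM.indep_vars_iff_distr_eq_PiM'[OF hne rvQ] indep_Q by simp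
  have dW: "distr N (PiM {1..h} (\<lambda>_. borel)) (\<lambda>\<omega>. restrict (\<lambda>j. W j \<omega>) {1..h}) =
      PiM {1..h} (\<lambda>j. distr N borel (W j))"
    using PN.indep_vars_iff_distr_eq_PiM'[OF hne rvW] indep_Wh by simp
  have PE: "PiM {1..h} (\<lambda>j. distr M borel (Q j)) = PiM {1..h} (\<lambda>j. distr N borel (W j))"
    by (rule PiM_cong[OF refl marg_eq])
  have "H g 0 z = (\<integral>\<omega>. g (vecP \<phi> h z (\<lambda>j. R j \<omega> * (if \<eta> \<le> U j \<omega> then 1 else 0))) \<partial>M)"
    unfolding H_def vecf_zero ..
  also have "\<dots> = (\<integral>\<omega>. g (vecP \<phi> h z (restrict (\<lambda>j. Q j \<omega>) {1..h})) \<partial>M)"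
    by (intro Bochner_Integration.integral_cong refl arg_cong[where f=g] vecP_cong) (auto simp: Q_def)
  also have "\<dots> = (\<integral>b. g (vecP \<phi> h z b) \<partial>distr M (PiM {1..h} (\<lambda>_. borel)) (\<lambda>\<omega>. restrict (\<lambda>j. Q j \<omega>) {1..h}))"
    by (rule integral_distr[symmetric, OF _ mP]) (auto intro!: measurable_restrict)
  also have "\<dots> = (\<integral>b. g (vecP \<phi> h z b) \<partial>distr N (PiM {1..h} (\<lambda>_. borel)) (\<lambda>\<omega>. restrict (\<lambda>j. W j \<omega>) {1..h}))"
    unfolding dQ dW PE ..
  also have "\<dots> = (\<integral>\<omega>. g (vecP \<phi> h z (restrict (\<lambda>j. W j \<omega>) {1..h})) \<partial>N)"
    by (rule integral_distr[OF _ mP]) (auto intro!: measurable_restrict)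
  also have "\<dots> = H0 g z"
    unfolding H0_def by (intro Bochner_Integration.integral_cong refl arg_cong[where f=g] vecP_cong) auto
  finally show ?thesis ..
qed

end



context mt begin

lemma RHS_eq:
  assumes g: "continuous_on UNIV g" and C: "\<And>v. \<bar>g v\<bar> \<le> C"
  shows "(LINT \<omega>|N. g (\<lambda>j. if j \<le> h then Y j \<omega> else 0)) = (\<integral>w. H g 0 w \<partial>distr N borel (Y 0))"
proof -
  let ?Yf = "\<lambda>j. if j = 0 then Y 0 else W j"
  let ?A = "\<lambda>\<omega>. restrict (\<lambda>j. ?Yf j \<omega>) {0}" and ?B = "\<lambda>\<omega>. restrict (\<lambda>j. ?Yf j \<omega>) {1..h}"
  have ind: "PN.indep_var (PiM {0} (\<lambda>_. borel)) ?A (PiM {1..h} (\<lambda>_. borel)) ?B"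
    by (rule PN.indep_var_restrict[OF Y_indep]) auto
  define F0 where "F0 = (\<lambda>p::(nat \<Rightarrow> real) \<times> (nat \<Rightarrow> real). g (vecP \<phi> h (fst p 0) (snd p)))"
  have f0[measurable]: "(\<lambda>p. fst p 0) \<in> borel_measurable (PiM {0::nat} (\<lambda>_. borel) \<Otimes>\<^sub>M PiM {1..h} (\<lambda>_. borel))"
    by (rule measurable_compose[OF measurable_fst measurable_component_singleton]) simp
  have v: "(\<lambda>p. vecP \<phi> h (fst p 0) (snd p)) \<in> borel_measurable (PiM {0::nat} (\<lambda>_. borel) \<Otimes>\<^sub>M PiM {1..h} (\<lambda>_. borel))"
    by (rule vecP_meas) (auto intro!: measurable_compose[OF measurable_snd measurable_component_singleton])
  have mF: "F0 \<in> borel_measurable (PiM {0::nat} (\<lambda>_. borel) \<Otimes>\<^sub>M PiM {1..h} (\<lambda>_. borel))"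
    unfolding F0_def by (rule measurable_compose[OF v borel_measurable_continuous_onI[OF g]])
  have fr: "(\<integral>\<omega>. F0 (?A \<omega>, ?B \<omega>) \<partial>N) = (\<integral>\<omega>. (\<integral>\<omega>'. F0 (?A \<omega>, ?B \<omega>') \<partial>N) \<partial>N)"
    by (rule freeze[OF N ind mF, where C=C]) (simp add: F0_def C)
  have vc: "vecP \<phi> h z (?B \<omega>) = vecP \<phi> h z (\<lambda>j. W j \<omega>)" for z \<omega>
    by (rule vecP_cong) auto
  have l: "F0 (?A \<omega>, ?B \<omega>) = g (vecP \<phi> h (Y 0 \<omega>) (\<lambda>j. W j \<omega>))" for \<omega>
    unfolding F0_def fst_conv snd_conv vc by simp
  have r: "(\<integral>\<omega>'. F0 (?A \<omega>, ?B \<omega>') \<partial>N) = H0 g (Y 0 \<omega>)" for \<omega>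
    unfolding F0_def fst_conv snd_conv vc H0_def by simp
  have m1: "(\<lambda>\<omega>. (\<lambda>j. if j \<le> h then Y j \<omega> else 0)) \<in> borel_measurable N"
  proof (rule measurable_coordinatewise_then_product)
    fix j
    show "(\<lambda>\<omega>. if j \<le> h then Y j \<omega> else 0) \<in> borel_measurable N"
      by (cases "j \<le> h") (auto intro: meas_Y)
  qed
  have vm: "(\<lambda>\<omega>. vecP \<phi> h (Y 0 \<omega>) (\<lambda>j. W j \<omega>)) \<in> borel_measurable N"
    by (rule vecP_meas) auto
  have "(LINT \<omega>|N. g (\<lambda>j. if j \<le> h then Y j \<omega> else 0)) = (LINT \<omega>|N. g (vecP \<phi> h (Y 0 \<omega>) (\<lambda>j. W j \<omega>)))"
  proof (rule integral_cong_AE)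
    show "(\<lambda>\<omega>. g (\<lambda>j. if j \<le> h then Y j \<omega> else 0)) \<in> borel_measurable N"
      by (rule measurable_compose[OF m1 borel_measurable_continuous_onI[OF g]])
    show "(\<lambda>\<omega>. g (vecP \<phi> h (Y 0 \<omega>) (\<lambda>j. W j \<omega>))) \<in> borel_measurable N"
      by (rule measurable_compose[OF vm borel_measurable_continuous_onI[OF g]])
    show "AE \<omega> in N. g (\<lambda>j. if j \<le> h then Y j \<omega> else 0) = g (vecP \<phi> h (Y 0 \<omega>) (\<lambda>j. W j \<omega>))"
      using AE_goodN by eventually_elim (simp add: vecY_ident)
  qed
  also have "\<dots> = (\<integral>\<omega>. F0 (?A \<omega>, ?B \<omega>) \<partial>N)" by (simp only: l)
  also have "\<dots> = (\<integral>\<omega>. H0 g (Y 0 \<omega>) \<partial>N)" by (simp only: fr r)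
  also have "\<dots> = (\<integral>\<omega>. H g 0 (Y 0 \<omega>) \<partial>N)" by (simp only: H0_eq[OF g])
  also have "\<dots> = (\<integral>w. H g 0 w \<partial>distr N borel (Y 0))"
    by (rule integral_distr[symmetric]) (auto intro: H_meas[OF g C])
  finally show ?thesis .
qed

definition f :: "real \<Rightarrow> real" where "f x = measure M (Sx x)"

lemma RV: "eventually (\<lambda>x. f x > 0) at_top" "\<And>c. c > 0 \<Longrightarrow> ((\<lambda>x. f (c * x) / f x) \<longlongrightarrow> c powr (- \<alpha>)) at_top"
  using X0_tail unfolding regularly_varying_def f_def Sx_def by auto

lemma cdfY0: "cdf (distr N borel (Y 0)) t = (if t < 1 then 0 else 1 - t powr (- \<alpha>))"
proof -
  have c: "cdf (distr N borel (Y 0)) t = PN.prob (Y 0 -` {..t} \<inter> space N)" for t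
    by (simp add: cdf_def measure_distr)
  have c1: "t \<ge> 1 \<Longrightarrow> PN.prob (Y 0 -` {..t} \<inter> space N) = 1 - t powr (- \<alpha>)" for t
  proof -
    assume t: "t \<ge> 1"
    have "Y 0 -` {..t} \<inter> space N = space N - {\<omega> \<in> space N. t < Y 0 \<omega>}" by auto
    then show ?thesis using Y0_tail[OF t] by (simp add: PN.prob_compl)
  qed
  show ?thesis
  proof (cases "t < 1")
    case True
    have "PN.prob (Y 0 -` {..t} \<inter> space N) \<le> PN.prob (Y 0 -` {..1} \<inter> space N)"
      using True by (intro PN.finite_measure_mono) auto
    also have "\<dots> = 0" using c1[of 1] by simp
    finally show ?thesis using True c by (simp add: measure_nonneg antisym)
  next
    case False then show ?thesis using c c1 by simp
  qed
qed

lemma cdf_mu: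
  assumes s: "s > 0" and pos: "f s > 0"
  shows "cdf (distr (uniform_measure M (Sx s)) borel (\<lambda>\<omega>. X 0 \<omega> / s)) t =
     (if t < 1 then 0 else 1 - f (t * s) / f s)"
proof -
  have e0: "emeasure M (Sx s) \<noteq> 0" "emeasure M (Sx s) \<noteq> \<infinity>"
    using pos unfolding f_def by (auto simp: PM.emeasure_eq_measure)
  have "cdf (distr (uniform_measure M (Sx s)) borel (\<lambda>\<omega>. X 0 \<omega> / s)) t =
      measure (uniform_measure M (Sx s)) ((\<lambda>\<omega>. X 0 \<omega> / s) -` {..t} \<inter> space M)"
    by (simp add: cdf_def measure_distr)
  also have "\<dots> = measure M (Sx s \<inter> ((\<lambda>\<omega>. X 0 \<omega> / s) -` {..t} \<inter> space M)) / f s"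
    unfolding f_def by (rule measure_uniform_measure[OF e0]) measurable
  also have "\<dots> = (if t < 1 then 0 else 1 - f (t * s) / f s)"
  proof (cases "t < 1")
    case True
    have "Sx s \<inter> ((\<lambda>\<omega>. X 0 \<omega> / s) -` {..t} \<inter> space M) = {}"
    proof -
      { fix \<omega> assume "s < X 0 \<omega>" "X 0 \<omega> / s \<le> t"
        then have "X 0 \<omega> \<le> t * s" using s by (simp add: divide_le_eq)
        also have "t * s < s" using True s by simp
        finally have False using \<open>s < X 0 \<omega>\<close> by simp }
      then show ?thesis unfolding Sx_def by auto
    qed
    then show ?thesis using True by simp
  next
    case False
    have sub: "Sx (t * s) \<subseteq> Sx s"
      using False s unfolding Sx_def by (auto intro: order.strict_trans1[of s "t * s"])
    have "Sx s \<inter> ((\<lambda>\<omega>. X 0 \<omega> / s) -` {..t} \<inter> space M) = Sx s - Sx (t * s)"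
      using s unfolding Sx_def by (auto simp: divide_le_eq not_less)
    then have "measure M (Sx s \<inter> ((\<lambda>\<omega>. X 0 \<omega> / s) -` {..t} \<inter> space M)) = f s - f (t * s)"
      unfolding f_def using sub by (simp add: PM.finite_measure_Diff)
    then show ?thesis using False pos by (simp add: diff_divide_distrib)
  qed
  finally show ?thesis .
qed

lemma wconv:
  assumes s: "filterlim s at_top sequentially" and sx: "\<And>n. s n > 0" "\<And>n. f (s n) > 0"
  shows "weak_conv_m (\<lambda>n. distr (uniform_measure M (Sx (s n))) borel (\<lambda>\<omega>. X 0 \<omega> / s n)) (distr N borel (Y 0))"
  unfolding weak_conv_m_def weak_conv_def
proof (intro allI impI)
  fix t :: real
  show "(\<lambda>n. cdf (distr (uniform_measure M (Sx (s n))) borel (\<lambda>\<omega>. X 0 \<omega> / s n)) t) \<longlonglongrightarrow> cdf (distr N borel (Y 0)) t"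
  proof (cases "t < 1")
    case True then show ?thesis by (simp add: cdf_mu[OF sx] cdfY0)
  next
    case False
    then have t: "t > 0" by simp
    have "(\<lambda>n. f (t * s n) / f (s n)) \<longlonglongrightarrow> t powr (- \<alpha>)"
      by (rule filterlim_compose[OF RV(2)[OF t] s])
    then have "(\<lambda>n. 1 - f (t * s n) / f (s n)) \<longlonglongrightarrow> 1 - t powr (- \<alpha>)"
      by (intro tendsto_intros)
    then show ?thesis using False by (simp add: cdf_mu[OF sx] cdfY0)
  qed
qed

end



context mt begin

lemma seq_lim:
  assumes g: "continuous_on UNIV g" and C: "\<And>v. \<bar>g v\<bar> \<le> C"
    and s: "filterlim s at_top sequentially" and sx: "\<And>n. s n > 0" "\<And>n. f (s n) > 0"
  shows "(\<lambda>n. \<integral>w. H g (1 / s n) w \<partial>distr (uniform_measure M (Sx (s n))) borel (\<lambda>\<omega>. X 0 \<omega> / s n))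
     \<longlonglongrightarrow> (\<integral>w. H g 0 w \<partial>distr N borel (Y 0))"
proof -
  let ?\<mu> = "\<lambda>n. distr (uniform_measure M (Sx (s n))) borel (\<lambda>\<omega>. X 0 \<omega> / s n)"
  let ?P = "distr N borel (Y 0)"
  have rd: "real_distribution (?\<mu> n)" for n
  proof -
    have e0: "emeasure M (Sx (s n)) \<noteq> 0" "emeasure M (Sx (s n)) \<noteq> \<infinity>"
      using sx(2)[of n] unfolding f_def by (auto simp: PM.emeasure_eq_measure)
    have "prob_space (?\<mu> n)"
      by (rule prob_space.prob_space_distr[OF prob_space_uniform_measure[OF e0]]) simp
    then show ?thesis by (simp add: real_distribution_def real_distribution_axioms_def)
  qed
  have rP: "real_distribution ?P"
  proof -
    have "prob_space ?P" by (rule PN.prob_space_distr) simp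
    then show ?thesis by (simp add: real_distribution_def real_distribution_axioms_def)
  qed
  have wc: "weak_conv_m ?\<mu> ?P" by (rule wconv[OF s sx])
  obtain \<Omega> :: "real measure" and Ys Yl where
    \<Omega>: "prob_space \<Omega>" and Ysm: "\<And>n. Ys n \<in> measurable \<Omega> borel"
    and Ysd: "\<And>n. distr \<Omega> borel (Ys n) = ?\<mu> n" and Ylm: "Yl \<in> measurable \<Omega> lborel"
    and Yld: "distr \<Omega> borel Yl = ?P" and conv: "\<And>x. x \<in> space \<Omega> \<Longrightarrow> (\<lambda>n. Ys n x) \<longlonglongrightarrow> Yl x"
    using Skorohod[OF rd rP wc] by blast
  interpret PO: prob_space \<Omega> by (rule \<Omega>)
  have Ylm': "Yl \<in> borel_measurable \<Omega>" using Ylm by simp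
  have e1: "(\<integral>w. H g (1 / s n) w \<partial>?\<mu> n) = (\<integral>\<omega>. H g (1 / s n) (Ys n \<omega>) \<partial>\<Omega>)" for n
    unfolding Ysd[symmetric] by (rule integral_distr[OF Ysm]) (rule H_meas[OF g C], auto)
  have e2: "(\<integral>w. H g 0 w \<partial>?P) = (\<integral>\<omega>. H g 0 (Yl \<omega>) \<partial>\<Omega>)"
    unfolding Yld[symmetric] by (rule integral_distr[OF Ylm']) (rule H_meas[OF g C], auto)
  have inv: "(\<lambda>n. 1 / s n) \<longlonglongrightarrow> 0"
    using tendsto_inverse_0_at_top[OF s] by (simp add: inverse_eq_divide)
  have "(\<lambda>n. \<integral>\<omega>. H g (1 / s n) (Ys n \<omega>) \<partial>\<Omega>) \<longlonglongrightarrow> (\<integral>\<omega>. H g 0 (Yl \<omega>) \<partial>\<Omega>)"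
  proof (rule integral_dominated_convergence[where w="\<lambda>_. C"])
    show "(\<lambda>\<omega>. H g 0 (Yl \<omega>)) \<in> borel_measurable \<Omega>" by (rule H_meas[OF g C]) (auto intro: Ylm')
    show "\<And>n. (\<lambda>\<omega>. H g (1 / s n) (Ys n \<omega>)) \<in> borel_measurable \<Omega>" by (rule H_meas[OF g C]) (auto intro: Ysm)
    show "integrable \<Omega> (\<lambda>_. C)" by simp
    show "\<And>n. AE \<omega> in \<Omega>. norm (H g (1 / s n) (Ys n \<omega>)) \<le> C" using H_bound[OF g C] by simp
    show "AE \<omega> in \<Omega>. (\<lambda>n. H g (1 / s n) (Ys n \<omega>)) \<longlonglongrightarrow> H g 0 (Yl \<omega>)"
    proof (rule AE_I2)
      fix \<omega> assume "\<omega> \<in> space \<Omega>"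
      then have p: "(\<lambda>n. (1 / s n, Ys n \<omega>)) \<longlonglongrightarrow> (0, Yl \<omega>)"
        by (intro tendsto_Pair inv conv)
      show "(\<lambda>n. H g (1 / s n) (Ys n \<omega>)) \<longlonglongrightarrow> H g 0 (Yl \<omega>)"
        using continuous_on_tendsto_compose[OF H_cont[OF g C] p] by simp
    qed
  qed
  then show ?thesis unfolding e1 e2 .
qed

theorem main:
  "\<forall>g :: (nat \<Rightarrow> real) \<Rightarrow> real. continuous_on UNIV g \<and> bounded (range g) \<longrightarrow>
      ((\<lambda>x. LINT \<omega>|uniform_measure M {\<omega> \<in> space M. x < X 0 \<omega>}.
              g (\<lambda>j. if j \<le> h then X j \<omega> / x powr (\<phi> ^ j) else 0))
        \<longlongrightarrow> (LINT \<omega>|N. g (\<lambda>j. if j \<le> h then Y j \<omega> else 0))) at_top"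
proof (intro allI impI)
  fix g :: "(nat \<Rightarrow> real) \<Rightarrow> real"
  assume "continuous_on UNIV g \<and> bounded (range g)"
  then have g: "continuous_on UNIV g" and bd: "bounded (range g)" by auto
  from bd obtain C where C: "\<And>v. \<bar>g v\<bar> \<le> C" unfolding bounded_iff by auto
  obtain x1 where x1: "\<And>x. x \<ge> x1 \<Longrightarrow> f x > 0" using RV(1) unfolding eventually_at_top_linorder by auto
  define x0 where "x0 = max x1 1"
  have x0: "x0 > 0" "\<And>x. x \<ge> x0 \<Longrightarrow> f x > 0" using x1 unfolding x0_def by auto
  define L where "L = (\<lambda>x. LINT \<omega>|uniform_measure M {\<omega> \<in> space M. x < X 0 \<omega>}.
              g (\<lambda>j. if j \<le> h then X j \<omega> / x powr (\<phi> ^ j) else 0))"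
  define T where "T = (LINT \<omega>|N. g (\<lambda>j. if j \<le> h then Y j \<omega> else 0))"
  have T: "T = (\<integral>w. H g 0 w \<partial>distr N borel (Y 0))" unfolding T_def by (rule RHS_eq[OF g C])
  have "((\<lambda>x. L (max x x0)) \<longlongrightarrow> T) at_top"
  proof (rule tendsto_at_topI_sequentially)
    fix Xs :: "nat \<Rightarrow> real" assume Xs: "filterlim Xs at_top sequentially"
    define s where "s n = max (Xs n) x0" for n
    have s: "filterlim s at_top sequentially"
      by (rule filterlim_at_top_mono[OF Xs]) (auto simp: s_def)
    have sx: "\<And>n. s n > 0" "\<And>n. f (s n) > 0" using x0 by (auto simp: s_def)
    have eq: "L (max (Xs n) x0) = (\<integral>w. H g (1 / s n) w \<partial>distr (uniform_measure M (Sx (s n))) borel (\<lambda>\<omega>. X 0 \<omega> / s n))" for n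
    proof -
      have "L (s n) = (\<integral>w. H g (1 / s n) w \<partial>distr (uniform_measure M (Sx (s n))) borel (\<lambda>\<omega>. X 0 \<omega> / s n))"
        unfolding L_def Sx_def[symmetric]
        by (rule LHS_eq[OF g C sx(1)]) (use sx(2) in \<open>simp add: f_def\<close>)
      then show ?thesis by (simp add: s_def)
    qed
    show "(\<lambda>n. L (max (Xs n) x0)) \<longlonglongrightarrow> T"
      unfolding eq T by (rule seq_lim[OF g C s sx])
  qed
  moreover have "eventually (\<lambda>x. L (max x x0) = L x) at_top"
    using eventually_ge_at_top[of x0] by eventually_elim (simp add: max_def)
  ultimately have "(L \<longlongrightarrow> T) at_top" by (rule Lim_transform_eventually)
  then show "((\<lambda>x. LINT \<omega>|uniform_measure M {\<omega> \<in> space M. x < X 0 \<omega>}.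
              g (\<lambda>j. if j \<le> h then X j \<omega> / x powr (\<phi> ^ j) else 0))
        \<longlongrightarrow> (LINT \<omega>|N. g (\<lambda>j. if j \<le> h then Y j \<omega> else 0))) at_top"
    unfolding L_def T_def .
qed

end

theorem mainTheorem11:
  fixes M :: "'a measure" and N :: "'b measure"
    and U R X :: "nat \<Rightarrow> 'a \<Rightarrow> real" and F_R :: "real measure"
    and Y W :: "nat \<Rightarrow> 'b \<Rightarrow> real"
    and \<phi> \<eta> \<alpha> :: real and h :: nat
  assumes M: "prob_space M"
    and phi: "\<phi> > 0" and eta: "0 \<le> \<eta>" "\<eta> < 1" and alpha: "\<alpha> > 0"
    and indep: "prob_space.indep_vars M (\<lambda>_. borel)
        (\<lambda>i. case i of Inl t \<Rightarrow> U t | Inr (Inl t) \<Rightarrow> R t | Inr (Inr _) \<Rightarrow> X 0)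
        ({Inl t | t. t \<ge> 1} \<union> {Inr (Inl t) | t. t \<ge> 1} \<union> {Inr (Inr ())})"
    and U_unif: "\<And>t. t \<ge> 1 \<Longrightarrow> distr M borel (U t) = uniform_measure lborel {0..1}"
    and R_distr: "\<And>t. t \<ge> 1 \<Longrightarrow> distr M borel (R t) = F_R"
    and R_nonneg: "\<And>t. t \<ge> 1 \<Longrightarrow> AE \<omega> in M. R t \<omega> \<ge> 0"
    and X0_nonneg: "AE \<omega> in M. X 0 \<omega> \<ge> 0"
    and X0_tail: "regularly_varying (- \<alpha>) (\<lambda>x. measure M {\<omega> \<in> space M. x < X 0 \<omega>})"
    and X_rec: "\<And>t \<omega>. X (Suc t) \<omega> =
        R (Suc t) \<omega> * (if \<eta> \<le> U (Suc t) \<omega> then X t \<omega> powr \<phi> else 1)"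
    and h: "h \<ge> 1"
    and N: "prob_space N"
    and Y_indep: "prob_space.indep_vars N (\<lambda>_. borel)
        (\<lambda>j. if j = 0 then Y 0 else W j) {0..h}"
    and Y0_tail: "\<And>y. y \<ge> 1 \<Longrightarrow> measure N {\<omega> \<in> space N. y < Y 0 \<omega>} = y powr (- \<alpha>)"
    and W_distr: "\<And>j A. j \<in> {1..h} \<Longrightarrow> A \<in> sets borel \<Longrightarrow>
        measure N (W j -` A \<inter> space N) = (1 - \<eta>) * measure F_R A + \<eta> * indicator A 0"
    and Y_rec: "\<And>j \<omega>. Y (Suc j) \<omega> = Y j \<omega> powr \<phi> * W (Suc j) \<omega>"
  shows "\<forall>g :: (nat \<Rightarrow> real) \<Rightarrow> real. continuous_on UNIV g \<and> bounded (range g) \<longrightarrow>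
      ((\<lambda>x. LINT \<omega>|uniform_measure M {\<omega> \<in> space M. x < X 0 \<omega>}.
              g (\<lambda>j. if j \<le> h then X j \<omega> / x powr (\<phi> ^ j) else 0))
        \<longlongrightarrow> (LINT \<omega>|N. g (\<lambda>j. if j \<le> h then Y j \<omega> else 0))) at_top"
  proof -
  interpret mt M N U R X F_R Y W \<phi> \<eta> \<alpha> h
    by (rule mt.intro[OF M phi eta(1) eta(2) alpha indep U_unif R_distr R_nonneg X0_nonneg X0_tail
          X_rec h N Y_indep Y0_tail W_distr Y_rec])
  show ?thesis by (rule main)
qed

end
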